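(* Let $k\le n$ be positive integers and $A\in\mathbb{C}^{n\times n}$ with eigenvalues ordered so that $|\lambda_1(A)|\ge\cdots\ge|\lambda_n(A)|$. Then $$\left|\prod_{i=1}^k\lambda_i(A)\right|\le\left(\frac nk\right)^{k/2}\sqrt n^{\,k}\min\left\{\max_{|\alpha|=k}\prod_{i\in\alpha}\|\mathrm{col}_i(A)\|_\infty,\ \max_{|\alpha|=k}\prod_{i\in\alpha}\|\mathrm{row}_i(A)\|_\infty\right\},$$ where the maxima are over subsets $\alpha\subseteq\{1,\ldots,n\}$ with $|\alpha|=k$.
   Context: $\mathrm{col}_i(A)$ is the $i$th column and $\mathrm{row}_i(A)$ the (transposed) $i$th row of $A$; $\|\cdot\|_\infty$ is the maximum-modulus vector norm. *)

theory Defs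
  imports "Jordan_Normal_Form.Jordan_Normal_Form_Existence"
begin

definition vec_inf_norm :: "complex vec \<Rightarrow> real" where
  "vec_inf_norm v = (MAX i \<in> {0..<dim_vec v}. cmod (v $ i))"

end

theory Submission
  imports Defs
begin


definition adjm :: "complex mat \<Rightarrow> complex mat" where
  "adjm M = mat (dim_col M) (dim_row M) (\<lambda>(i,j). cnj (M $$ (j,i)))"

lemma adjm_carrier[simp]: "M \<in> carrier_mat a b \<Longrightarrow> adjm M \<in> carrier_mat b a"
  by (auto simp: adjm_def)
lemma adjm_dims[simp]: "dim_row (adjm M) = dim_col M" "dim_col (adjm M) = dim_row M"
  by (auto simp: adjm_def)
lemma adjm_index[simp]: "i < dim_col M \<Longrightarrow> j < dim_row M \<Longrightarrow> adjm M $$ (i,j) = cnj (M $$ (j,i))"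
  by (auto simp: adjm_def)
lemma adjm_adjm[simp]: "adjm (adjm M) = M"
  by (rule eq_matI, auto)

lemma adjm_mult: assumes "X \<in> carrier_mat a b" "Y \<in> carrier_mat b c"
  shows "adjm (X * Y) = adjm Y * adjm X"
  using assms by (intro eq_matI) (auto simp: scalar_prod_def ac_simps)

lemma adjm_one[simp]: "adjm (1\<^sub>m n) = 1\<^sub>m n"
  by (rule eq_matI, auto)

lemma adjm_minus: assumes "X \<in> carrier_mat a b" "Y \<in> carrier_mat a b"
  shows "adjm (X - Y) = adjm X - adjm Y"
  using assms by (intro eq_matI) auto

lemma adjm_smult: "adjm (c \<cdot>\<^sub>m X) = cnj c \<cdot>\<^sub>m adjm X"
  by (intro eq_matI) auto

interpretation cnj_hom: comm_ring_hom cnj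
  by unfold_locales auto

lemma adjm_map: "adjm M = map_mat cnj (transpose_mat M)"
  by (intro eq_matI) auto

lemma det_adjm: assumes "M \<in> carrier_mat n n" shows "det (adjm M) = cnj (det M)"
  using assms unfolding adjm_map by (simp add: cnj_hom.hom_det det_transpose)

definition tr :: "complex mat \<Rightarrow> complex" where
  "tr M = (\<Sum>i<dim_row M. M $$ (i,i))"

lemma tr_comm: assumes "X \<in> carrier_mat a b" "Y \<in> carrier_mat b a"
  shows "tr (X * Y) = tr (Y * X)"
proof -
  have "tr (X * Y) = (\<Sum>i<a. \<Sum>j<b. X $$ (i,j) * Y $$ (j,i))"
    using assms by (auto simp: tr_def scalar_prod_def intro!: sum.cong sum.reindex_cong[of id] atLeast0LessThan)
  also have "\<dots> = (\<Sum>j<b. \<Sum>i<a. Y $$ (j,i) * X $$ (i,j))"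
    by (subst sum.swap) (simp add: ac_simps)
  also have "\<dots> = tr (Y * X)"
    using assms by (auto simp: tr_def scalar_prod_def atLeast0LessThan intro!: sum.cong)
  finally show ?thesis .
qed

lemma gram_diag: assumes "N \<in> carrier_mat a b" "j < b"
  shows "(adjm N * N) $$ (j,j) = of_real (\<Sum>i<a. (cmod (N $$ (i,j)))\<^sup>2)"
proof -
  have "(adjm N * N) $$ (j,j) = (\<Sum>i<a. cnj (N $$ (i,j)) * N $$ (i,j))"
    using assms by (auto simp: scalar_prod_def atLeast0LessThan intro!: sum.cong)
  also have "\<dots> = (\<Sum>i<a. of_real ((cmod (N $$ (i,j)))\<^sup>2))"
    by (intro sum.cong refl) (metis complex_norm_square mult.commute of_real_power)
  finally show ?thesis by simp
qed



definition ci :: "nat set \<Rightarrow> nat \<Rightarrow> nat" where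
  "ci S j = sorted_list_of_set S ! j"

definition subc :: "'a mat \<Rightarrow> nat set \<Rightarrow> 'a mat" where
  "subc X S = mat (dim_row X) (card S) (\<lambda>(i,j). X $$ (i, ci S j))"

definition subr :: "'a mat \<Rightarrow> nat set \<Rightarrow> 'a mat" where
  "subr Y S = mat (card S) (dim_col Y) (\<lambda>(i,j). Y $$ (ci S i, j))"

lemma ci_bij: assumes "finite S" shows "bij_betw (ci S) {0..<card S} S"
proof -
  have "bij_betw ((!) (sorted_list_of_set S)) {..<length (sorted_list_of_set S)} (set (sorted_list_of_set S))"
    by (rule bij_betw_nth) auto
  then show ?thesis using assms unfolding ci_def by (simp add: atLeast0LessThan)
qed

lemma ci_in: "finite S \<Longrightarrow> j < card S \<Longrightarrow> ci S j \<in> S"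
  using ci_bij bij_betwE by fastforce

lemma ci_inj: "finite S \<Longrightarrow> inj_on (ci S) {0..<card S}"
  using ci_bij bij_betw_def by blast

lemma ci_image: "finite S \<Longrightarrow> ci S ` {0..<card S} = S"
  by (metis ci_bij bij_betw_def)

lemma cauchy_binet:
  fixes X Y :: "'a::comm_ring_1 mat"
  assumes X: "X \<in> carrier_mat k n" and Y: "Y \<in> carrier_mat n k"
  shows "det (X * Y) = (\<Sum>S\<in>{S. S \<subseteq> {0..<n} \<and> card S = k}. det (subc X S) * det (subr Y S))"
proof -
  let ?K = "{0..<k}"
  let ?F = "PiE ?K (\<lambda>_. {0..<n})"
  let ?P = "{p. p permutes ?K}"
  let ?Sk = "{S. S \<subseteq> {0..<n} \<and> card S = k}"
  define Yf where "Yf f = mat k k (\<lambda>(i,j). Y $$ (f i, j))" for f :: "nat \<Rightarrow> nat"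
  define h where "h f = (\<Prod>i\<in>?K. X $$ (i, f i)) * det (Yf f)" for f
  have XY: "X * Y \<in> carrier_mat k k" using X Y by auto
  have Yfc: "Yf f \<in> carrier_mat k k" for f unfolding Yf_def by auto
  have detYf: "det (Yf f) = (\<Sum>p\<in>?P. signof p * (\<Prod>i\<in>?K. Y $$ (f i, p i)))" for f
    unfolding det_def'[OF Yfc]
    by (intro sum.cong refl arg_cong2[where f="(*)"] prod.cong) (auto simp: Yf_def permutes_in_image)
  have bij: "bij_betw (\<lambda>(S,p). restrict (ci S \<circ> p) ?K) (SIGMA S:?Sk. ?P) (?F \<inter> {f. inj_on f ?K})"
      unfolding bij_betw_def
    proof (intro conjI)
      show "inj_on (\<lambda>(S,p). restrict (ci S \<circ> p) ?K) (SIGMA S:?Sk. ?P)"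
      proof (intro inj_onI, clarify)
        fix S p S' p'
        assume S: "S \<subseteq> {0..<n}" "k = card S" and p: "p permutes {0..<card S}"
          and S': "S' \<subseteq> {0..<n}" "card S' = card S" and p': "p' permutes {0..<card S}"
          and eq: "restrict (ci S \<circ> p) {0..<card S} = restrict (ci S' \<circ> p') {0..<card S}"
        have fS: "finite S" "finite S'" using S S' finite_subset by auto
        have "S = ci S ` p ` {0..<card S}" using ci_image[OF fS(1)] permutes_image[OF p] by simp
        also have "\<dots> = (restrict (ci S \<circ> p) {0..<card S}) ` {0..<card S}" by auto
        also have "\<dots> = (restrict (ci S' \<circ> p') {0..<card S}) ` {0..<card S}" by (simp add: eq)
        also have "\<dots> = ci S' ` p' ` {0..<card S'}" using S' by auto
        also have "\<dots> = S'" using ci_image[OF fS(2)] permutes_image[OF p'] S' by simp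
        finally have SS: "S = S'" .
        have "p i = p' i" for i
        proof (cases "i < card S")
          case True
          have "ci S (p i) = ci S (p' i)"
            using fun_cong[OF eq, of i] True SS by auto
          then show ?thesis using inj_onD[OF ci_inj[OF fS(1)]] True
              permutes_in_image[OF p] permutes_in_image[OF p'] by auto
        next
          case False
          then show ?thesis using permutes_not_in[OF p] permutes_not_in[OF p'] by auto
        qed
        then show "S = S' \<and> p = p'" using SS by auto
      qed
      show "(\<lambda>(S,p). restrict (ci S \<circ> p) ?K) ` (SIGMA S:?Sk. ?P) = ?F \<inter> {f. inj_on f ?K}"
      proof
        show "(\<lambda>(S,p). restrict (ci S \<circ> p) ?K) ` (SIGMA S:?Sk. ?P) \<subseteq> ?F \<inter> {f. inj_on f ?K}"
        proof
          fix f assume "f \<in> (\<lambda>(S,p). restrict (ci S \<circ> p) ?K) ` (SIGMA S:?Sk. ?P)"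
          then obtain S p where S: "S \<subseteq> {0..<n}" "card S = k" and p: "p permutes ?K"
            and fd: "f = restrict (ci S \<circ> p) ?K" by auto
          have fS: "finite S" using S finite_subset by auto
          have "f \<in> ?F"
            using ci_in[OF fS] permutes_in_image[OF p] S fd by auto
          moreover have "inj_on f ?K"
          proof -
            have "inj_on (ci S \<circ> p) ?K"
              by (rule comp_inj_on) (use permutes_inj_on[OF p] ci_inj[OF fS] permutes_image[OF p] S in auto)
            then show ?thesis unfolding fd inj_on_def by simp
          qed
          ultimately show "f \<in> ?F \<inter> {f. inj_on f ?K}" by auto
        qed
        show "?F \<inter> {f. inj_on f ?K} \<subseteq> (\<lambda>(S,p). restrict (ci S \<circ> p) ?K) ` (SIGMA S:?Sk. ?P)"
        proof
          fix f assume f: "f \<in> ?F \<inter> {f. inj_on f ?K}"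
          define S where "S = f ` ?K"
          have Ssub: "S \<subseteq> {0..<n}" using f unfolding S_def by auto
          have cS: "card S = k" using f unfolding S_def by (simp add: card_image)
          have fS: "finite S" unfolding S_def by auto
          define p where "p i = (if i < k then the_inv_into ?K (ci S) (f i) else i)" for i
          have bijc: "bij_betw (ci S) ?K S" using ci_bij[OF fS] cS by simp
          have fiS: "i < k \<Longrightarrow> f i \<in> S" for i unfolding S_def by auto
          have cip: "i < k \<Longrightarrow> ci S (p i) = f i" for i
            unfolding p_def using f_the_inv_into_f_bij_betw[OF bijc] fiS by auto
          have pK: "p i < k" if i: "i < k" for i
          proof -
            have "f i \<in> ci S ` ?K" using fiS[OF i] bij_betw_imp_surj_on[OF bijc] by simp
            then have "the_inv_into ?K (ci S) (f i) \<in> ?K"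
              by (rule the_inv_into_into[OF bij_betw_imp_inj_on[OF bijc]]) simp
            then show ?thesis using i unfolding p_def by simp
          qed
          have pinj: "inj_on p ?K"
          proof (rule inj_onI)
            fix i j assume "i \<in> ?K" "j \<in> ?K" "p i = p j"
            then have "f i = f j" using cip by (metis atLeastLessThan_iff)
            then show "i = j" using f \<open>i \<in> ?K\<close> \<open>j \<in> ?K\<close> by (auto dest: inj_onD)
          qed
          have pperm: "p permutes ?K"
          proof (rule bij_imp_permutes)
            show "bij_betw p ?K ?K"
            proof -
              have "p ` ?K = ?K" by (rule endo_inj_surj) (use pK pinj in auto)
              then show ?thesis using pinj by (simp add: bij_betw_def)
            qed
            show "\<And>x. x \<notin> ?K \<Longrightarrow> p x = x" unfolding p_def by auto
          qed
          have "f = restrict (ci S \<circ> p) ?K"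
            using f cip by (auto simp: PiE_def extensional_def)
          then show "f \<in> (\<lambda>(S,p). restrict (ci S \<circ> p) ?K) ` (SIGMA S:?Sk. ?P)"
            using Ssub cS pperm by (intro image_eqI[of _ _ "(S,p)"]) auto
        qed
      qed
    qed
  have "det (X * Y) = (\<Sum>p\<in>?P. signof p * (\<Prod>i\<in>?K. \<Sum>j\<in>{0..<n}. X $$ (i,j) * Y $$ (j, p i)))"
    unfolding det_def'[OF XY]
    using X Y by (intro sum.cong refl arg_cong2[where f="(*)"] prod.cong) 
       (auto simp: permutes_in_image scalar_prod_def)
  also have "\<dots> = (\<Sum>p\<in>?P. signof p * (\<Sum>f\<in>?F. \<Prod>i\<in>?K. X $$ (i,f i) * Y $$ (f i, p i)))"
    by (subst prod_sum_PiE) auto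
  also have "\<dots> = (\<Sum>p\<in>?P. \<Sum>f\<in>?F. signof p * ((\<Prod>i\<in>?K. X $$ (i,f i)) * (\<Prod>i\<in>?K. Y $$ (f i, p i))))"
    by (simp only: sum_distrib_left prod.distrib)
  also have "\<dots> = (\<Sum>f\<in>?F. \<Sum>p\<in>?P. signof p * ((\<Prod>i\<in>?K. X $$ (i,f i)) * (\<Prod>i\<in>?K. Y $$ (f i, p i))))"
    by (rule sum.swap)
  also have "\<dots> = (\<Sum>f\<in>?F. h f)"
    unfolding h_def detYf sum_distrib_left by (intro sum.cong refl) (simp only: mult.left_commute)
  also have "\<dots> = (\<Sum>f\<in>?F \<inter> {f. inj_on f ?K}. h f)"
  proof (rule sum.mono_neutral_right)
    show "finite ?F" by (auto intro: finite_PiE)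
    show "?F \<inter> {f. inj_on f ?K} \<subseteq> ?F" by auto
    show "\<forall>f\<in>?F - ?F \<inter> {f. inj_on f ?K}. h f = 0"
    proof
      fix f assume "f \<in> ?F - ?F \<inter> {f. inj_on f ?K}"
      then obtain i j where ij: "i < k" "j < k" "i \<noteq> j" "f i = f j"
        unfolding inj_on_def by auto
      have "det (Yf f) = 0"
        by (rule det_identical_rows[OF Yfc ij(3) ij(1) ij(2)]) 
           (use ij in \<open>auto simp: Yf_def\<close>)
      then show "h f = 0" unfolding h_def by simp
    qed
  qed
  also have "\<dots> = (\<Sum>x\<in>(SIGMA S:?Sk. ?P). h ((\<lambda>(S,p). restrict (ci S \<circ> p) ?K) x))"
    by (rule sum.reindex_bij_betw[OF bij, symmetric])
  also have "\<dots> = (\<Sum>(S,p)\<in>(SIGMA S:?Sk. ?P). h (restrict (ci S \<circ> p) ?K))"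
    by (intro sum.cong refl) auto
  also have "\<dots> = (\<Sum>S\<in>?Sk. \<Sum>p\<in>?P. h (restrict (ci S \<circ> p) ?K))"
    by (rule sum.Sigma[symmetric]) (auto intro: finite_permutations)
  also have "\<dots> = (\<Sum>S\<in>?Sk. det (subc X S) * det (subr Y S))"
  proof (rule sum.cong[OF refl])
    fix S assume S: "S \<in> ?Sk"
    then have fS: "finite S" and cS: "card S = k" using finite_subset by auto
    have R: "subr Y S \<in> carrier_mat k k" using Y cS by (auto simp: subr_def)
    have C: "subc X S \<in> carrier_mat k k" using X cS by (auto simp: subc_def)
    have "h (restrict (ci S \<circ> p) ?K) = (\<Prod>i\<in>?K. subc X S $$ (i, p i)) * (signof p * det (subr Y S))"
      if p: "p permutes ?K" for p
    proof -
      have "Yf (restrict (ci S \<circ> p) ?K) = mat k k (\<lambda>(i,j). subr Y S $$ (p i, j))"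
        using permutes_in_image[OF p] cS Y by (intro eq_matI) (auto simp: Yf_def subr_def)
      then have "det (Yf (restrict (ci S \<circ> p) ?K)) = signof p * det (subr Y S)"
        using det_permute_rows[OF R p] by simp
      moreover have "(\<Prod>i\<in>?K. X $$ (i, restrict (ci S \<circ> p) ?K i)) = (\<Prod>i\<in>?K. subc X S $$ (i, p i))"
        using permutes_in_image[OF p] cS X by (intro prod.cong) (auto simp: subc_def)
      ultimately show ?thesis unfolding h_def by simp
    qed
    then have "(\<Sum>p\<in>?P. h (restrict (ci S \<circ> p) ?K)) = 
      (\<Sum>p\<in>?P. (\<Prod>i\<in>?K. subc X S $$ (i, p i)) * (signof p * det (subr Y S)))"
      by (intro sum.cong) auto
    also have "\<dots> = det (subc X S) * det (subr Y S)"
      unfolding det_def'[OF C] sum_distrib_right by (intro sum.cong refl) (simp only: mult.commute mult.left_commute mult.assoc)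
    finally show "(\<Sum>p\<in>?P. h (restrict (ci S \<circ> p) ?K)) = det (subc X S) * det (subr Y S)" .
  qed
  finally show ?thesis .
qed



lemma amgm:
  fixes x :: "'b \<Rightarrow> real"
  assumes I: "finite I" "I \<noteq> {}" and x: "\<And>i. i \<in> I \<Longrightarrow> x i \<ge> 0"
  shows "(\<Prod>i\<in>I. x i) \<le> ((\<Sum>i\<in>I. x i) / card I) ^ card I"
proof -
  define m where "m = (\<Sum>i\<in>I. x i) / card I"
  have cI: "card I > 0" using I card_gt_0_iff by blast
  have m0: "m \<ge> 0" unfolding m_def using x by (auto intro!: sum_nonneg divide_nonneg_nonneg)
  show ?thesis
  proof (cases "m = 0")
    case True
    then have "(\<Sum>i\<in>I. x i) = 0" using cI by (simp add: m_def)
    then have "\<forall>i\<in>I. x i = 0" using sum_nonneg_eq_0_iff[OF I(1)] x by blast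
    then have "(\<Prod>i\<in>I. x i) = 0" using I by auto
    then show ?thesis using True cI by (simp add: m_def[symmetric])
  next
    case False
    then have m: "m > 0" using m0 by auto
    have "(\<Prod>i\<in>I. x i / m) \<le> (\<Prod>i\<in>I. exp (x i / m - 1))"
    proof (rule prod_mono)
      fix i assume "i \<in> I"
      then show "0 \<le> x i / m \<and> x i / m \<le> exp (x i / m - 1)"
        using x m exp_ge_add_one_self[of "x i / m - 1"] by auto
    qed
    also have "\<dots> = exp (\<Sum>i\<in>I. (x i / m - 1))" by (simp add: exp_sum I(1))
    also have "(\<Sum>i\<in>I. (x i / m - 1)) = 0"
    proof -
      have "(\<Sum>i\<in>I. (x i / m - 1)) = (\<Sum>i\<in>I. x i) / m - card I"
        by (simp add: sum_subtractf sum_divide_distrib)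
      also have "(\<Sum>i\<in>I. x i) = m * card I" using cI by (simp add: m_def)
      finally show ?thesis using m by simp
    qed
    finally have "(\<Prod>i\<in>I. x i / m) \<le> 1" by simp
    moreover have "(\<Prod>i\<in>I. x i / m) = (\<Prod>i\<in>I. x i) / m ^ card I"
      by (simp add: prod_dividef)
    ultimately show ?thesis using m by (simp add: m_def[symmetric] divide_le_eq)
  qed
qed

lemma cauchy_schwarz_sum:
  fixes u v :: "'b \<Rightarrow> real"
  shows "(\<Sum>i\<in>I. u i * v i)\<^sup>2 \<le> (\<Sum>i\<in>I. (u i)\<^sup>2) * (\<Sum>i\<in>I. (v i)\<^sup>2)"
proof -
  have "0 \<le> (\<Sum>i\<in>I. \<Sum>j\<in>I. (u i * v j - u j * v i)\<^sup>2)"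
    by (intro sum_nonneg) auto
  also have "\<dots> = (\<Sum>i\<in>I. \<Sum>j\<in>I. (u i)\<^sup>2 * (v j)\<^sup>2) + (\<Sum>i\<in>I. \<Sum>j\<in>I. (v i)\<^sup>2 * (u j)\<^sup>2)
      - 2 * (\<Sum>i\<in>I. \<Sum>j\<in>I. (u i * v i) * (u j * v j))"
    by (simp add: sum_subtractf sum.distrib sum_distrib_left power2_eq_square algebra_simps)
  also have "\<dots> = 2 * ((\<Sum>i\<in>I. (u i)\<^sup>2) * (\<Sum>i\<in>I. (v i)\<^sup>2)) - 2 * (\<Sum>i\<in>I. u i * v i)\<^sup>2"
    unfolding sum_product[symmetric] power2_eq_square by simp
  finally show ?thesis by simp
qed

lemma eig_det_tr:
  fixes H :: "complex mat"
  assumes H: "H \<in> carrier_mat k k" and k: "k \<ge> 1"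
    and ev: "\<And>\<mu>. eigenvalue H \<mu> \<Longrightarrow> \<exists>r\<ge>0. \<mu> = of_real r"
  shows "\<exists>r. det H = of_real r \<and> 0 \<le> r \<and> 0 \<le> Re (tr H) \<and> r \<le> (Re (tr H) / k) ^ k"
proof -
  obtain as where cp: "char_poly H = (\<Prod>a\<leftarrow>as. [:-a,1:])" and len: "length as = k"
    using char_poly_factorized[OF H] by auto
  obtain U P Q where sch: "schur_decomposition H as = (U,P,Q)"
    by (cases "schur_decomposition H as") auto
  from schur_decomposition[OF H cp sch] have sw: "similar_mat_wit H U P Q"
    and ut: "upper_triangular U" and dg: "diag_mat U = as" by auto
  from sw H have U: "U \<in> carrier_mat k k" and P: "P \<in> carrier_mat k k" and Q: "Q \<in> carrier_mat k k"
    and QP: "Q * P = 1\<^sub>m k" and HPUQ: "H = P * U * Q"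
    unfolding similar_mat_wit_def Let_def by auto
  have "det H = det U" using det_similar[of H U] sw unfolding similar_mat_def by auto
  also have "\<dots> = prod_list as" using det_upper_triangular[OF ut U] dg by simp
  finally have detH: "det H = (\<Prod>i\<in>{0..<k}. as ! i)" by (simp add: prod.list_conv_set_nth len)
  have "tr H = tr (P * (U * Q))" using HPUQ P U Q by simp
  also have "\<dots> = tr ((U * Q) * P)" by (rule tr_comm[OF P]) (use U Q in auto)
  also have "\<dots> = tr U" using U Q P QP by simp
  also have "\<dots> = (\<Sum>i\<in>{0..<k}. as ! i)" using U dg unfolding tr_def diag_mat_def
    by (auto simp: atLeast0LessThan intro!: sum.cong)
  finally have trH: "tr H = (\<Sum>i\<in>{0..<k}. as ! i)" .
  have re: "as ! i = of_real (Re (as ! i)) \<and> Re (as ! i) \<ge> 0" if i: "i < k" for i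
  proof -
    have "as ! i \<in> set as" using i len by auto
    then have "poly (char_poly H) (as ! i) = 0" unfolding cp by (rule linear_poly_root)
    then have "eigenvalue H (as ! i)" using eigenvalue_root_char_poly[OF H] by simp
    then obtain r where "r \<ge> 0" "as ! i = of_real r" using ev by blast
    then show ?thesis by simp
  qed
  define x where "x i = Re (as ! i)" for i
  have "det H = of_real (\<Prod>i\<in>{0..<k}. x i)"
    unfolding detH x_def of_real_prod using re by (intro prod.cong) auto
  moreover have "Re (tr H) = (\<Sum>i\<in>{0..<k}. x i)" unfolding trH x_def by (simp add: Re_sum)
  moreover have "(\<Prod>i\<in>{0..<k}. x i) \<le> ((\<Sum>i\<in>{0..<k}. x i) / card {0..<k}) ^ card {0..<k}"
    by (rule amgm) (use k re x_def in auto)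
  moreover have "0 \<le> (\<Prod>i\<in>{0..<k}. x i)" "0 \<le> (\<Sum>i\<in>{0..<k}. x i)"
    using re x_def by (auto intro: prod_nonneg sum_nonneg)
  ultimately show ?thesis by (intro exI[of _ "\<Prod>i\<in>{0..<k}. x i"]) simp
qed



definition colm :: "complex vec \<Rightarrow> complex mat" where
  "colm v = mat (dim_vec v) 1 (\<lambda>(i,j). v $ i)"

lemma colm_carrier[simp]: "v \<in> carrier_vec k \<Longrightarrow> colm v \<in> carrier_mat k 1"
  by (auto simp: colm_def)

lemma colm_carrier'[simp]: "v \<in> carrier_vec k \<Longrightarrow> colm v \<in> carrier_mat k (Suc 0)"
  by (auto simp: colm_def)

lemma mult_colm: assumes "M \<in> carrier_mat m k" "v \<in> carrier_vec k"
  shows "M * colm v = colm (M *\<^sub>v v)"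
  using assms by (intro eq_matI) (auto simp: colm_def scalar_prod_def)

lemma colm_smult: "colm (a \<cdot>\<^sub>v v) = a \<cdot>\<^sub>m colm v"
  by (intro eq_matI) (auto simp: colm_def)

lemma colm_zero_iff: assumes "v \<in> carrier_vec k" shows "colm v = 0\<^sub>m k 1 \<longleftrightarrow> v = 0\<^sub>v k"
proof
  assume h: "colm v = 0\<^sub>m k 1"
  show "v = 0\<^sub>v k"
  proof (rule eq_vecI)
    fix i assume "i < dim_vec (0\<^sub>v k)"
    then have "colm v $$ (i,0) = 0" using h by simp
    then show "v $ i = 0\<^sub>v k $ i" using assms \<open>i < dim_vec (0\<^sub>v k)\<close> by (auto simp: colm_def)
  qed (use assms in auto)
next
  assume "v = 0\<^sub>v k" then show "colm v = 0\<^sub>m k 1" by (intro eq_matI) (auto simp: colm_def)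
qed

lemma quad_form: assumes N: "N \<in> carrier_mat a b" and V: "V \<in> carrier_mat b 1"
  shows "(adjm V * (adjm N * N) * V) $$ (0,0) = of_real (\<Sum>i<a. (cmod ((N * V) $$ (i,0)))\<^sup>2)"
proof -
  have "adjm V * (adjm N * N) * V = adjm (N * V) * (N * V)"
  proof -
    have aN: "adjm N \<in> carrier_mat b a" and aV: "adjm V \<in> carrier_mat 1 b" using N V by auto
    have "adjm V * (adjm N * N) * V = adjm V * ((adjm N * N) * V)"
      using aV aN N V by (intro assoc_mult_mat) auto
    also have "(adjm N * N) * V = adjm N * (N * V)" using aN N V by (intro assoc_mult_mat) auto
    also have "adjm V * (adjm N * (N * V)) = (adjm V * adjm N) * (N * V)"
      using aV aN N V by (intro assoc_mult_mat[symmetric]) auto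
    also have "adjm V * adjm N = adjm (N * V)" using adjm_mult[OF N V] by simp
    finally show ?thesis .
  qed
  then show ?thesis using gram_diag[of "N * V" a 1 0] N V by simp
qed

lemma zero_from_norm: assumes M: "M \<in> carrier_mat a 1"
  and s: "(\<Sum>i<a. (cmod (M $$ (i,0)))\<^sup>2) = 0"
  shows "M = 0\<^sub>m a 1"
proof -
  have "\<forall>i\<in>{..<a}. (cmod (M $$ (i,0)))\<^sup>2 = 0"
    using sum_nonneg_eq_0_iff[of "{..<a}" "\<lambda>i. (cmod (M $$ (i,0)))\<^sup>2"] s by auto
  then show ?thesis using M by (intro eq_matI) auto
qed

lemma det_scale_rows: assumes M: "M \<in> carrier_mat k k"
  shows "det (mat k k (\<lambda>(i,j). a i * M $$ (i,j))) = (\<Prod>i\<in>{0..<k}. a i) * det M"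
proof -
  have C: "mat k k (\<lambda>(i,j). a i * M $$ (i,j)) \<in> carrier_mat k k" by auto
  show ?thesis
    unfolding det_def'[OF C] det_def'[OF M] sum_distrib_left
  proof (intro sum.cong refl)
    fix p assume p: "p \<in> {p. p permutes {0..<k}}"
    have "(\<Prod>i = 0..<k. mat k k (\<lambda>(i, j). a i * M $$ (i, j)) $$ (i, p i)) = (\<Prod>i = 0..<k. a i * M $$ (i, p i))"
      using permutes_in_image[of p "{0..<k}"] p by (intro prod.cong) auto
    then show "signof p * (\<Prod>i = 0..<k. mat k k (\<lambda>(i, j). a i * M $$ (i, j)) $$ (i, p i)) =
         (\<Prod>i\<in>{0..<k}. a i) * (signof p * (\<Prod>i = 0..<k. M $$ (i, p i)))"
      by (simp add: prod.distrib)
  qed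
qed

lemma subc_adjm: assumes "dim_row M = n" "S \<subseteq> {0..<n}"
  shows "subc (adjm M) S = adjm (subr M S)"
proof -
  have fS: "finite S" using assms finite_subset by auto
  show ?thesis using assms ci_in[OF fS]
    by (intro eq_matI) (auto simp: subc_def subr_def subset_eq)
qed

lemma subr_adjm: assumes "dim_col M = n" "S \<subseteq> {0..<n}"
  shows "subr (adjm M) S = adjm (subc M S)"
proof -
  have fS: "finite S" using assms finite_subset by auto
  show ?thesis using assms ci_in[OF fS]
    by (intro eq_matI) (auto simp: subc_def subr_def subset_eq)
qed

lemma cmod_add_sq: "(cmod (x + y))\<^sup>2 = (cmod x)\<^sup>2 + (cmod y)\<^sup>2 + 2 * Re (cnj x * y)"
  by (simp only: cmod_power2) (simp add: power2_eq_square algebra_simps)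

lemma cnj_mult_self: "cnj z * z = of_real ((cmod z)\<^sup>2)"
  by (metis complex_norm_square mult.commute of_real_power)



lemma core:
  fixes A Pk Bk :: "complex mat" and c :: "nat \<Rightarrow> real"
  assumes A: "A \<in> carrier_mat n n" and Pk: "Pk \<in> carrier_mat n k" and Bk: "Bk \<in> carrier_mat k k"
    and AP: "A * Pk = Pk * Bk"
    and inj: "\<And>V. V \<in> carrier_mat k 1 \<Longrightarrow> Pk * V = 0\<^sub>m n 1 \<Longrightarrow> V = 0\<^sub>m k 1"
    and cA: "\<And>i j. i < n \<Longrightarrow> j < n \<Longrightarrow> cmod (A $$ (i,j)) \<le> c j"
    and k: "1 \<le> k" "k \<le> n"
  shows "cmod (det Bk) \<le> sqrt ((real n ^ 2 / real k) ^ k) *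
     (MAX S \<in> {S. S \<subseteq> {0..<n} \<and> card S = k}. \<Prod>j\<in>S. c j)"
proof -
  let ?Sk = "{S. S \<subseteq> {0..<n} \<and> card S = k}"
  define Pm where "Pm = (MAX S \<in> ?Sk. \<Prod>j\<in>S. c j)"
  have c0: "c j \<ge> 0" if "j < n" for j using cA[of 0 j] that norm_ge_zero[of "A $$ (0,j)"] by linarith
  have finSk: "finite ?Sk" by (rule finite_subset[of _ "Pow {0..<n}"]) auto
  have neSk: "{0..<k} \<in> ?Sk" using k by auto
  have piPm: "(\<Prod>j\<in>S. c j) \<le> Pm" if "S \<in> ?Sk" for S
    unfolding Pm_def using finSk that by (intro Max_ge) auto
  have pi0: "(\<Prod>j\<in>S. c j) \<ge> 0" if "S \<in> ?Sk" for S
    using that c0 by (intro prod_nonneg) auto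
  have Pm0: "Pm \<ge> 0" using piPm[OF neSk] pi0[OF neSk] by simp
  define G where "G = adjm Pk * Pk"
  have G: "G \<in> carrier_mat k k" using Pk unfolding G_def by auto
  have aPk: "adjm Pk \<in> carrier_mat k n" using Pk by auto
  have quadG: "(adjm V * G * V) $$ (0,0) = of_real (\<Sum>i<n. (cmod ((Pk * V) $$ (i,0)))\<^sup>2)"
    if V: "V \<in> carrier_mat k 1" for V
    unfolding G_def by (rule quad_form[OF Pk V])
  have posq: "(\<Sum>i<n. (cmod ((Pk * V) $$ (i,0)))\<^sup>2) > 0" if V: "V \<in> carrier_mat k 1" "V \<noteq> 0\<^sub>m k 1" for V
  proof -
    have "(\<Sum>i<n. (cmod ((Pk * V) $$ (i,0)))\<^sup>2) \<noteq> 0"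
    proof
      assume "(\<Sum>i<n. (cmod ((Pk * V) $$ (i,0)))\<^sup>2) = 0"
      then have "Pk * V = 0\<^sub>m n 1" using Pk V by (intro zero_from_norm) auto
      then show False using inj V by auto
    qed
    moreover have "(\<Sum>i<n. (cmod ((Pk * V) $$ (i,0)))\<^sup>2) \<ge> 0" by (intro sum_nonneg) auto
    ultimately show ?thesis by simp
  qed
  have detG0: "det G \<noteq> 0"
  proof
    assume "det G = 0"
    then obtain v where v: "v \<in> carrier_vec k" "v \<noteq> 0\<^sub>v k" "G *\<^sub>v v = 0\<^sub>v k"
      using det_0_iff_vec_prod_zero_field[OF G] by auto
    define V where "V = colm v"
    have V: "V \<in> carrier_mat k 1" unfolding V_def using v by simp
    have V0: "V \<noteq> 0\<^sub>m k 1" unfolding V_def using colm_zero_iff[OF v(1)] v(2) by simp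
    have GV: "G * V = 0\<^sub>m k 1" unfolding V_def using mult_colm[OF G v(1)] v(3) colm_zero_iff by simp
    have "adjm V * G * V = adjm V * (G * V)" using V G by (intro assoc_mult_mat) auto
    also have "\<dots> = 0\<^sub>m 1 1" using GV V by simp
    finally have "(adjm V * G * V) $$ (0,0) = 0" by simp
    then have "complex_of_real (\<Sum>i<n. (cmod ((Pk * V) $$ (i,0)))\<^sup>2) = 0" using quadG[OF V] by metis
    then have "(\<Sum>i<n. (cmod ((Pk * V) $$ (i,0)))\<^sup>2) = 0" by (simp only: of_real_eq_0_iff)
    then show False using posq[OF V V0] by simp
  qed
  define Gi where "Gi = (1 / det G) \<cdot>\<^sub>m adj_mat G"
  have Gi: "Gi \<in> carrier_mat k k" unfolding Gi_def using adj_mat(1)[OF G] by simp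
  have GGi: "G * Gi = 1\<^sub>m k"
    unfolding Gi_def using mult_smult_distrib[OF G adj_mat(1)[OF G]] adj_mat(2)[OF G] detG0
    by (auto intro!: eq_matI)
  have GiG: "Gi * G = 1\<^sub>m k"
    unfolding Gi_def using mult_smult_assoc_mat[OF adj_mat(1)[OF G] G] adj_mat(3)[OF G] detG0
    by (auto intro!: eq_matI)
  have adjG: "adjm G = G" unfolding G_def using adjm_mult[OF aPk Pk] by simp
  have adjGi: "adjm Gi = Gi"
  proof -
    have "adjm Gi * G = 1\<^sub>m k"
      using adjm_mult[OF G Gi] GGi adjG by simp
    then have "adjm Gi * (G * Gi) = Gi" using Gi G 
      by (metis assoc_mult_mat adjm_carrier left_mult_one_mat)
    then show ?thesis using GGi Gi by simp
  qed
  define Bm where "Bm = mat n n (\<lambda>(i,j). if c j = 0 then 0 else A $$ (i,j) / complex_of_real (c j))"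
  define Dm where "Dm = mat n n (\<lambda>(i,j). if i = j then complex_of_real (c j) else 0)"
  have Bm: "Bm \<in> carrier_mat n n" and Dm: "Dm \<in> carrier_mat n n" by (auto simp: Bm_def Dm_def)
  have Bm1: "cmod (Bm $$ (i,j)) \<le> 1" if ij: "i < n" "j < n" for i j
  proof (cases "c j = 0")
    case False
    then have "c j > 0" using c0[OF ij(2)] by simp
    then show ?thesis using cA[OF ij] ij by (auto simp: Bm_def norm_divide divide_le_eq)
  qed (use ij in \<open>auto simp: Bm_def\<close>)
  have Dmult: "(Dm * M) $$ (i,j) = complex_of_real (c i) * M $$ (i,j)"
    if M: "M \<in> carrier_mat n m" and ij: "i < n" "j < m" for M m i j
  proof -
    have "(Dm * M) $$ (i,j) = (\<Sum>l\<in>{0..<n}. Dm $$ (i,l) * M $$ (l,j))"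
      using M ij Dm by (simp add: scalar_prod_def)
    also have "\<dots> = (\<Sum>l\<in>{0..<n}. if l = i then complex_of_real (c i) * M $$ (i,j) else 0)"
      by (intro sum.cong refl) (auto simp: Dm_def ij)
    also have "\<dots> = complex_of_real (c i) * M $$ (i,j)" using ij by simp
    finally show ?thesis .
  qed
  have ABD: "A = Bm * Dm"
  proof (rule eq_matI)
    fix i j assume ij: "i < dim_row (Bm * Dm)" "j < dim_col (Bm * Dm)"
    then have i: "i < n" and j: "j < n" using Bm Dm by auto
    have "(Bm * Dm) $$ (i,j) = (\<Sum>l\<in>{0..<n}. Bm $$ (i,l) * Dm $$ (l,j))"
      using i j Bm Dm by (simp add: scalar_prod_def)
    also have "\<dots> = (\<Sum>l\<in>{0..<n}. if l = j then Bm $$ (i,j) * complex_of_real (c j) else 0)"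
      by (intro sum.cong refl) (auto simp: Dm_def j)
    also have "\<dots> = Bm $$ (i,j) * complex_of_real (c j)" using j by simp
    also have "\<dots> = A $$ (i,j)"
    proof (cases "c j = 0")
      case True
      then have "A $$ (i,j) = 0" using cA[OF i j] by simp
      then show ?thesis using True i j by (simp add: Bm_def)
    next
      case False
      then show ?thesis using i j by (simp add: Bm_def)
    qed
    finally show "A $$ (i,j) = (Bm * Dm) $$ (i,j)" ..
  qed (use A Bm Dm in auto)
  define N where "N = adjm Bm * Pk"
  have aBm: "adjm Bm \<in> carrier_mat n n" using Bm by simp
  have N: "N \<in> carrier_mat n k" unfolding N_def using aBm Pk by simp
  have aN: "adjm N = adjm Pk * Bm" unfolding N_def using adjm_mult[OF aBm Pk] by simp
  have aNc: "adjm N \<in> carrier_mat k n" using N by simp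
  define Y where "Y = Dm * Pk"
  have Y: "Y \<in> carrier_mat n k" unfolding Y_def using Dm Pk by simp
  have eqXY: "adjm N * Y = G * Bk"
  proof -
    have "adjm N * Y = (adjm Pk * Bm) * (Dm * Pk)" unfolding aN Y_def ..
    also have "\<dots> = adjm Pk * (Bm * (Dm * Pk))" using aPk Bm Dm Pk by (intro assoc_mult_mat) auto
    also have "Bm * (Dm * Pk) = (Bm * Dm) * Pk" using Bm Dm Pk by (intro assoc_mult_mat[symmetric]) auto
    also have "\<dots> = Pk * Bk" using ABD AP by simp
    also have "adjm Pk * (Pk * Bk) = G * Bk" unfolding G_def using aPk Pk Bk by (intro assoc_mult_mat[symmetric]) auto
    finally show ?thesis .
  qed
  have "det G * det Bk = det (adjm N * Y)" using det_mult[OF G Bk] eqXY by simp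
  also have "\<dots> = (\<Sum>S\<in>?Sk. det (subc (adjm N) S) * det (subr Y S))"
    by (rule cauchy_binet[OF aNc Y])
  finally have main_eq: "det G * det Bk = (\<Sum>S\<in>?Sk. det (subc (adjm N) S) * det (subr Y S))" .
  have subrY: "det (subr Y S) = complex_of_real (\<Prod>j\<in>S. c j) * det (subr Pk S)" if S: "S \<in> ?Sk" for S
  proof -
    have fS: "finite S" and cS: "card S = k" using S finite_subset by auto
    have ciS: "ci S i < n" if "i < k" for i using ci_in[OF fS, of i] that cS S by auto
    have RP: "subr Pk S \<in> carrier_mat k k" using Pk cS by (auto simp: subr_def)
    have "subr Y S = mat k k (\<lambda>(i,j). complex_of_real (c (ci S i)) * subr Pk S $$ (i,j))"
      using Y Pk cS ciS Dmult[OF Pk] by (intro eq_matI) (auto simp: subr_def Y_def)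
    then have "det (subr Y S) = (\<Prod>i\<in>{0..<k}. complex_of_real (c (ci S i))) * det (subr Pk S)"
      using det_scale_rows[OF RP] by simp
    also have "(\<Prod>i\<in>{0..<k}. complex_of_real (c (ci S i))) = (\<Prod>j\<in>S. complex_of_real (c j))"
      using prod.reindex_bij_betw[OF ci_bij[OF fS], of "\<lambda>j. complex_of_real (c j)"] cS by simp
    finally show ?thesis by simp
  qed
  define a where "a S = det (subc (adjm N) S)" for S
  define b where "b S = det (subr Pk S)" for S
  have detG: "det G = complex_of_real (\<Sum>S\<in>?Sk. (cmod (b S))\<^sup>2)"
  proof -
    have "det G = (\<Sum>S\<in>?Sk. det (subc (adjm Pk) S) * det (subr Pk S))"
      unfolding G_def by (rule cauchy_binet[OF aPk Pk])
    also have "\<dots> = (\<Sum>S\<in>?Sk. complex_of_real ((cmod (b S))\<^sup>2))"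
    proof (intro sum.cong refl)
      fix S assume S: "S \<in> ?Sk"
      have RP: "subr Pk S \<in> carrier_mat k k" using Pk S by (auto simp: subr_def)
      have "subc (adjm Pk) S = adjm (subr Pk S)" using Pk S by (intro subc_adjm) auto
      then show "det (subc (adjm Pk) S) * det (subr Pk S) = complex_of_real ((cmod (b S))\<^sup>2)"
        using det_adjm[OF RP] cnj_mult_self unfolding b_def by simp
    qed
    finally show ?thesis by simp
  qed
  have detK: "det (adjm N * N) = complex_of_real (\<Sum>S\<in>?Sk. (cmod (a S))\<^sup>2)"
  proof -
    have "det (adjm N * N) = (\<Sum>S\<in>?Sk. det (subc (adjm N) S) * det (subr N S))"
      by (rule cauchy_binet[OF aNc N])
    also have "\<dots> = (\<Sum>S\<in>?Sk. complex_of_real ((cmod (a S))\<^sup>2))"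
    proof (intro sum.cong refl)
      fix S assume S: "S \<in> ?Sk"
      have RP: "subc (adjm N) S \<in> carrier_mat k k" using N S by (auto simp: subc_def)
      have "subr (adjm (adjm N)) S = adjm (subc (adjm N) S)" using N S by (intro subr_adjm) auto
      then have "subr N S = adjm (subc (adjm N) S)" by simp
      then show "det (subc (adjm N) S) * det (subr N S) = complex_of_real ((cmod (a S))\<^sup>2)"
        using det_adjm[OF RP] cnj_mult_self[of "a S"] unfolding a_def by (simp add: mult.commute)
    qed
    finally show ?thesis by simp
  qed
  define gG where "gG = (\<Sum>S\<in>?Sk. (cmod (b S))\<^sup>2)"
  define gK where "gK = (\<Sum>S\<in>?Sk. (cmod (a S))\<^sup>2)"
  have gG0: "gG > 0"
  proof -
    have "gG \<ge> 0" unfolding gG_def by (intro sum_nonneg) auto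
    moreover have "gG \<noteq> 0" using detG detG0 unfolding gG_def[symmetric] by auto
    ultimately show ?thesis by simp
  qed
  have gK0: "gK \<ge> 0" unfolding gK_def by (intro sum_nonneg) auto
  have ineq1: "gG * cmod (det Bk) \<le> Pm * (\<Sum>S\<in>?Sk. cmod (a S) * cmod (b S))"
  proof -
    have "gG * cmod (det Bk) = cmod (det G * det Bk)"
      using detG gG0 unfolding gG_def[symmetric] by (simp add: norm_mult)
    also have "det G * det Bk = (\<Sum>S\<in>?Sk. a S * (complex_of_real (\<Prod>j\<in>S. c j) * b S))"
      unfolding main_eq a_def b_def using subrY by (intro sum.cong refl) auto
    also have "cmod \<dots> \<le> (\<Sum>S\<in>?Sk. cmod (a S * (complex_of_real (\<Prod>j\<in>S. c j) * b S)))"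
      by (rule norm_sum)
    also have "\<dots> \<le> (\<Sum>S\<in>?Sk. Pm * (cmod (a S) * cmod (b S)))"
    proof (rule sum_mono)
      fix S assume S: "S \<in> ?Sk"
      have "cmod (a S * (complex_of_real (\<Prod>j\<in>S. c j) * b S)) = (\<Prod>j\<in>S. c j) * (cmod (a S) * cmod (b S))"
        using pi0[OF S] by (simp add: norm_mult del: of_real_prod)
      also have "\<dots> \<le> Pm * (cmod (a S) * cmod (b S))"
        using piPm[OF S] by (intro mult_right_mono) auto
      finally show "cmod (a S * (complex_of_real (\<Prod>j\<in>S. c j) * b S)) \<le> Pm * (cmod (a S) * cmod (b S))" .
    qed
    also have "\<dots> = Pm * (\<Sum>S\<in>?Sk. cmod (a S) * cmod (b S))" by (simp add: sum_distrib_left)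
    finally show ?thesis .
  qed
  have cs: "(\<Sum>S\<in>?Sk. cmod (a S) * cmod (b S))\<^sup>2 \<le> gK * gG"
    unfolding gK_def gG_def by (rule cauchy_schwarz_sum)
  have ineq2: "gG * (cmod (det Bk))\<^sup>2 \<le> Pm\<^sup>2 * gK"
  proof -
    have "(gG * cmod (det Bk))\<^sup>2 \<le> (Pm * (\<Sum>S\<in>?Sk. cmod (a S) * cmod (b S)))\<^sup>2"
      using ineq1 gG0 by (intro power_mono) auto
    also have "\<dots> = Pm\<^sup>2 * (\<Sum>S\<in>?Sk. cmod (a S) * cmod (b S))\<^sup>2" by (simp add: power_mult_distrib)
    also have "\<dots> \<le> Pm\<^sup>2 * (gK * gG)" using cs by (intro mult_left_mono) auto
    finally have "gG * (gG * (cmod (det Bk))\<^sup>2) \<le> gG * (Pm\<^sup>2 * gK)"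
      by (simp add: power_mult_distrib power2_eq_square ac_simps)
    then show ?thesis using gG0 by simp
  qed
  define K where "K = adjm N * N"
  have K: "K \<in> carrier_mat k k" unfolding K_def using aNc N by (rule mult_carrier_mat)
  define H where "H = Gi * K"
  have H: "H \<in> carrier_mat k k" unfolding H_def using Gi K by simp
  have KGH: "K = G * H"
  proof -
    have "G * H = (G * Gi) * K" unfolding H_def using G Gi K by (intro assoc_mult_mat[symmetric]) auto
    then show ?thesis using GGi K by simp
  qed
  have detKH: "det K = det G * det H" using KGH det_mult[OF G H] by simp
  have ev: "\<exists>r\<ge>0. \<mu> = complex_of_real r" if hev: "eigenvalue H \<mu>" for \<mu>
  proof -
    obtain v where v: "v \<in> carrier_vec k" "v \<noteq> 0\<^sub>v k" "H *\<^sub>v v = \<mu> \<cdot>\<^sub>v v"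
      using hev H unfolding eigenvalue_def eigenvector_def by auto
    define V where "V = colm v"
    have V: "V \<in> carrier_mat k 1" unfolding V_def using v by simp
    have V0: "V \<noteq> 0\<^sub>m k 1" unfolding V_def using colm_zero_iff[OF v(1)] v(2) by simp
    have HV: "H * V = \<mu> \<cdot>\<^sub>m V" unfolding V_def using mult_colm[OF H v(1)] v(3) colm_smult by simp
    have "adjm V * K * V = adjm V * (K * V)" using V K by (intro assoc_mult_mat) auto
    also have "K * V = G * (H * V)" unfolding KGH using G H V by (intro assoc_mult_mat) auto
    also have "\<dots> = \<mu> \<cdot>\<^sub>m (G * V)" unfolding HV using G V by (rule mult_smult_distrib)
    also have "adjm V * \<dots> = \<mu> \<cdot>\<^sub>m (adjm V * (G * V))" using V G by (intro mult_smult_distrib) auto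
    also have "adjm V * (G * V) = adjm V * G * V" using V G by (intro assoc_mult_mat[symmetric]) auto
    finally have eq: "adjm V * K * V = \<mu> \<cdot>\<^sub>m (adjm V * G * V)" .
    define q1 where "q1 = (\<Sum>i<n. (cmod ((N * V) $$ (i,0)))\<^sup>2)"
    define q2 where "q2 = (\<Sum>i<n. (cmod ((Pk * V) $$ (i,0)))\<^sup>2)"
    have e1: "(adjm V * K * V) $$ (0,0) = complex_of_real q1" unfolding K_def q1_def by (rule quad_form[OF N V])
    have e2: "(adjm V * G * V) $$ (0,0) = complex_of_real q2" unfolding q2_def by (rule quadG[OF V])
    have q2: "q2 > 0" unfolding q2_def by (rule posq[OF V V0])
    have q1: "q1 \<ge> 0" unfolding q1_def by (intro sum_nonneg) auto
    have "complex_of_real q1 = \<mu> * complex_of_real q2"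
      using arg_cong[OF eq, of "\<lambda>M. M $$ (0,0)"] e1 e2 V by simp
    then have "\<mu> = complex_of_real (q1 / q2)" using q2 by (simp add: field_simps)
    then show ?thesis using q1 q2 by (intro exI[of _ "q1 / q2"]) auto
  qed
  obtain r where r: "det H = complex_of_real r" "0 \<le> r" "0 \<le> Re (tr H)" "r \<le> (Re (tr H) / real k) ^ k"
    using eig_det_tr[OF H k(1) ev] by blast
  have trbound: "Re (tr H) \<le> real n ^ 2"
  proof -
    define Q1 where "Q1 = Gi * adjm Pk"
    have Q1: "Q1 \<in> carrier_mat k n" unfolding Q1_def using Gi aPk by (rule mult_carrier_mat)
    define Pr where "Pr = Pk * Q1"
    have Pr: "Pr \<in> carrier_mat n n" unfolding Pr_def using Pk Q1 by (rule mult_carrier_mat)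
    have adjPr: "adjm Pr = Pr"
    proof -
      have "adjm Pr = adjm Q1 * adjm Pk" unfolding Pr_def by (rule adjm_mult[OF Pk Q1])
      also have "adjm Q1 = adjm (adjm Pk) * adjm Gi" unfolding Q1_def by (rule adjm_mult[OF Gi aPk])
      finally have "adjm Pr = (Pk * Gi) * adjm Pk" using adjGi by simp
      also have "\<dots> = Pr" unfolding Pr_def Q1_def using Pk Gi aPk by (intro assoc_mult_mat) auto
      finally show ?thesis .
    qed
    have Q1Pk: "Q1 * Pk = 1\<^sub>m k"
    proof -
      have "Q1 * Pk = Gi * G" unfolding Q1_def G_def using Gi aPk Pk by (intro assoc_mult_mat) auto
      then show ?thesis using GiG by simp
    qed
    have PrPr: "Pr * Pr = Pr"
    proof -
      have "Pr * Pr = Pk * (Q1 * (Pk * Q1))" unfolding Pr_def using Pk Q1 by (intro assoc_mult_mat) auto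
      also have "Q1 * (Pk * Q1) = (Q1 * Pk) * Q1" using Pk Q1 by (intro assoc_mult_mat[symmetric]) auto
      also have "\<dots> = Q1" unfolding Q1Pk using Q1 by simp
      finally show ?thesis unfolding Pr_def .
    qed
    define X where "X = Pr * Bm"
    have X: "X \<in> carrier_mat n n" unfolding X_def using Pr Bm by (rule mult_carrier_mat)
    have aX: "adjm X = adjm Bm * Pr" unfolding X_def using adjm_mult[OF Pr Bm] adjPr by simp
    have XX: "adjm X * X = adjm Bm * X"
    proof -
      have "adjm X * X = (adjm Bm * Pr) * (Pr * Bm)" using aX X_def by simp
      also have "\<dots> = adjm Bm * (Pr * (Pr * Bm))" using aBm Pr Bm by (intro assoc_mult_mat) auto
      also have "Pr * (Pr * Bm) = (Pr * Pr) * Bm" using Pr Bm by (intro assoc_mult_mat[symmetric]) auto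
      finally show ?thesis unfolding PrPr X_def .
    qed
    have XB: "adjm X * Bm = adjm Bm * X"
    proof -
      have "adjm X * Bm = (adjm Bm * Pr) * Bm" using aX by simp
      also have "\<dots> = adjm Bm * (Pr * Bm)" using aBm Pr Bm by (intro assoc_mult_mat) auto
      finally show ?thesis unfolding X_def .
    qed
    have trHX: "tr H = tr (adjm X * X)"
    proof -
      define M where "M = Bm * adjm Bm"
      have M: "M \<in> carrier_mat n n" unfolding M_def using Bm aBm by (rule mult_carrier_mat)
      define W where "W = Q1 * M"
      have W: "W \<in> carrier_mat k n" unfolding W_def using Q1 M by (rule mult_carrier_mat)
      have MPk: "M * Pk \<in> carrier_mat n k" using M Pk by (rule mult_carrier_mat)
      have aPkc: "adjm Bm * Pk \<in> carrier_mat n k" using aBm Pk by (rule mult_carrier_mat)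
      have "K = (adjm Pk * Bm) * (adjm Bm * Pk)" unfolding K_def aN by (simp add: N_def)
      also have "\<dots> = adjm Pk * (Bm * (adjm Bm * Pk))" using aPk Bm aPkc by (intro assoc_mult_mat) auto
      also have "Bm * (adjm Bm * Pk) = M * Pk" unfolding M_def using Bm aBm Pk by (intro assoc_mult_mat[symmetric]) auto
      finally have KM: "K = adjm Pk * (M * Pk)" .
      have "H = Gi * (adjm Pk * (M * Pk))" unfolding H_def KM ..
      also have "\<dots> = Q1 * (M * Pk)" unfolding Q1_def using Gi aPk MPk by (intro assoc_mult_mat[symmetric]) auto
      also have "\<dots> = W * Pk" unfolding W_def using Q1 M Pk by (intro assoc_mult_mat[symmetric]) auto
      finally have "H = W * Pk" .
      then have "tr H = tr (Pk * W)" using tr_comm[OF W Pk] by simp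
      also have "Pk * W = Pr * M" unfolding W_def Pr_def using Pk Q1 M by (intro assoc_mult_mat[symmetric]) auto
      also have "\<dots> = X * adjm Bm" unfolding M_def X_def using Pr Bm aBm by (intro assoc_mult_mat[symmetric]) auto
      also have "tr (X * adjm Bm) = tr (adjm Bm * X)" by (rule tr_comm[OF X aBm])
      finally show ?thesis using XX by simp
    qed
    have cross: "adjm X * (Bm - X) = 0\<^sub>m n n"
    proof -
      have aXc: "adjm X \<in> carrier_mat n n" using X by simp
      have "adjm X * (Bm - X) = adjm X * Bm - adjm X * X" by (rule mult_minus_distrib_mat[OF aXc Bm X])
      also have "\<dots> = adjm Bm * X - adjm Bm * X" unfolding XB XX ..
      also have "\<dots> = 0\<^sub>m n n" using aBm X by (intro minus_r_inv_mat) auto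
      finally show ?thesis .
    qed
    have colj: "(\<Sum>i<n. (cmod (X $$ (i,j)))\<^sup>2) \<le> (\<Sum>i<n. (cmod (Bm $$ (i,j)))\<^sup>2)" if j: "j < n" for j
    proof -
      have "(adjm X * (Bm - X)) $$ (j,j) = (\<Sum>i\<in>{0..<n}. cnj (X $$ (i,j)) * (Bm $$ (i,j) - X $$ (i,j)))"
        using X Bm j by (simp add: scalar_prod_def)
      then have z: "(\<Sum>i<n. cnj (X $$ (i,j)) * (Bm $$ (i,j) - X $$ (i,j))) = 0"
        using cross j by (simp add: atLeast0LessThan)
      have "(\<Sum>i<n. (cmod (Bm $$ (i,j)))\<^sup>2) = (\<Sum>i<n. (cmod (X $$ (i,j)))\<^sup>2 + (cmod (Bm $$ (i,j) - X $$ (i,j)))\<^sup>2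
          + 2 * Re (cnj (X $$ (i,j)) * (Bm $$ (i,j) - X $$ (i,j))))"
      proof (intro sum.cong refl)
        fix i
        show "(cmod (Bm $$ (i,j)))\<^sup>2 = (cmod (X $$ (i,j)))\<^sup>2 + (cmod (Bm $$ (i,j) - X $$ (i,j)))\<^sup>2
          + 2 * Re (cnj (X $$ (i,j)) * (Bm $$ (i,j) - X $$ (i,j)))"
          using cmod_add_sq[of "X $$ (i,j)" "Bm $$ (i,j) - X $$ (i,j)"] by simp
      qed
      also have "\<dots> = (\<Sum>i<n. (cmod (X $$ (i,j)))\<^sup>2) + (\<Sum>i<n. (cmod (Bm $$ (i,j) - X $$ (i,j)))\<^sup>2)
          + 2 * Re (\<Sum>i<n. cnj (X $$ (i,j)) * (Bm $$ (i,j) - X $$ (i,j)))"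
        by (simp add: sum.distrib sum_distrib_left Re_sum)
      also have "\<dots> = (\<Sum>i<n. (cmod (X $$ (i,j)))\<^sup>2) + (\<Sum>i<n. (cmod (Bm $$ (i,j) - X $$ (i,j)))\<^sup>2)"
        unfolding z by simp
      finally show ?thesis by (smt (verit) sum_nonneg zero_le_power2)
    qed
    have "Re (tr (adjm X * X)) = (\<Sum>j<n. \<Sum>i<n. (cmod (X $$ (i,j)))\<^sup>2)"
    proof -
      have "tr (adjm X * X) = (\<Sum>j<n. complex_of_real (\<Sum>i<n. (cmod (X $$ (i,j)))\<^sup>2))"
        unfolding tr_def using X gram_diag[OF X] by (intro sum.cong) auto
      then show ?thesis by (simp add: Re_sum)
    qed
    also have "\<dots> \<le> (\<Sum>j<n. \<Sum>i<n. (cmod (Bm $$ (i,j)))\<^sup>2)" by (rule sum_mono) (simp add: colj)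
    also have "\<dots> \<le> (\<Sum>j<n. \<Sum>i<n. 1)"
    proof (intro sum_mono)
      fix j i assume "j \<in> {..<n}" "i \<in> {..<n}"
      then show "(cmod (Bm $$ (i,j)))\<^sup>2 \<le> 1" using Bm1[of i j] by (simp add: power_le_one)
    qed
    also have "\<dots> = real n ^ 2" by (simp add: power2_eq_square)
    finally show ?thesis using trHX by simp
  qed
  have gKr: "gK = gG * r"
  proof -
    have "complex_of_real gK = complex_of_real gG * complex_of_real r"
      using detK detKH detG r(1) unfolding K_def gK_def gG_def by simp
    then show ?thesis by (metis of_real_eq_iff of_real_mult)
  qed
  have "(cmod (det Bk))\<^sup>2 \<le> Pm\<^sup>2 * r" using ineq2 gG0 unfolding gKr
    by (simp add: ac_simps)
  also have "\<dots> \<le> Pm\<^sup>2 * (real n ^ 2 / real k) ^ k"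
  proof (intro mult_left_mono)
    have "Re (tr H) / real k \<le> real n ^ 2 / real k" using trbound k by (intro divide_right_mono) auto
    then have "(Re (tr H) / real k) ^ k \<le> (real n ^ 2 / real k) ^ k" using r(3) k by (intro power_mono) auto
    then show "r \<le> (real n ^ 2 / real k) ^ k" using r(4) by linarith
  qed auto
  finally have "cmod (det Bk) \<le> sqrt (Pm\<^sup>2 * (real n ^ 2 / real k) ^ k)" by (rule real_le_rsqrt)
  also have "\<dots> = sqrt ((real n ^ 2 / real k) ^ k) * Pm" using Pm0 by (simp add: real_sqrt_mult)
  finally show ?thesis unfolding Pm_def .
qed



lemma main_col:
  fixes A :: "complex mat" and n k :: nat and eigs :: "complex list"
  assumes A: "A \<in> carrier_mat n n" and k: "1 \<le> k" "k \<le> n"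
    and cp: "char_poly A = (\<Prod>a\<leftarrow>eigs. [:- a, 1:])"
  shows "cmod (\<Prod>i<k. eigs ! i) \<le> sqrt ((real n ^ 2 / real k) ^ k) *
     (MAX S \<in> {S. S \<subseteq> {0..<n} \<and> card S = k}. \<Prod>j\<in>S. vec_inf_norm (col A j))"
proof -
  obtain B P Q where sch: "schur_decomposition A eigs = (B,P,Q)"
    by (cases "schur_decomposition A eigs") auto
  from schur_decomposition[OF A cp sch] have sw: "similar_mat_wit A B P Q"
    and ut: "upper_triangular B" and dg: "diag_mat B = eigs" by auto
  from sw A have B: "B \<in> carrier_mat n n" and P: "P \<in> carrier_mat n n" and Q: "Q \<in> carrier_mat n n"
    and QP: "Q * P = 1\<^sub>m n" and PQ: "P * Q = 1\<^sub>m n" and APBQ: "A = P * B * Q"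
    unfolding similar_mat_wit_def Let_def by auto
  have eigsB: "eigs ! i = B $$ (i,i)" if "i < n" for i
    using dg that B unfolding diag_mat_def by auto
  define E where "E = mat n k (\<lambda>(i,j). if i = j then (1::complex) else 0)"
  have E: "E \<in> carrier_mat n k" unfolding E_def by auto
  define Pk where "Pk = P * E"
  have Pk: "Pk \<in> carrier_mat n k" unfolding Pk_def using P E by (rule mult_carrier_mat)
  define Bk where "Bk = mat k k (\<lambda>(i,j). B $$ (i,j))"
  have Bk: "Bk \<in> carrier_mat k k" unfolding Bk_def by auto
  have AP: "A * P = P * B"
  proof -
    have "A * P = P * B * (Q * P)" unfolding APBQ using P B Q by (metis assoc_mult_mat mult_carrier_mat)
    then show ?thesis using QP P B by simp
  qed
  have BE: "B * E = E * Bk"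
  proof (rule eq_matI)
    fix i j assume ij: "i < dim_row (E * Bk)" "j < dim_col (E * Bk)"
    then have i: "i < n" and j: "j < k" using E Bk by auto
    have "(B * E) $$ (i,j) = (\<Sum>l\<in>{0..<n}. B $$ (i,l) * E $$ (l,j))" using B E i j by (simp add: scalar_prod_def)
    also have "\<dots> = (\<Sum>l\<in>{0..<n}. if l = j then B $$ (i,j) else 0)"
      using j k by (intro sum.cong refl) (auto simp: E_def)
    also have "\<dots> = B $$ (i,j)" using j k by simp
    finally have l: "(B * E) $$ (i,j) = B $$ (i,j)" .
    have "(E * Bk) $$ (i,j) = (\<Sum>l\<in>{0..<k}. E $$ (i,l) * Bk $$ (l,j))" using Bk E i j by (simp add: scalar_prod_def)
    also have "\<dots> = (\<Sum>l\<in>{0..<k}. if l = i then B $$ (i,j) else 0)"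
      using i j by (intro sum.cong refl) (auto simp: E_def Bk_def)
    also have "\<dots> = (if i < k then B $$ (i,j) else 0)" by simp
    also have "\<dots> = B $$ (i,j)" using ut B i j unfolding upper_triangular_def by auto
    finally show "(B * E) $$ (i,j) = (E * Bk) $$ (i,j)" using l by simp
  qed (use B E Bk in auto)
  have APk: "A * Pk = Pk * Bk"
  proof -
    have "A * Pk = (A * P) * E" unfolding Pk_def using A P E by (intro assoc_mult_mat[symmetric]) auto
    also have "\<dots> = P * (B * E)" unfolding AP using P B E by (intro assoc_mult_mat) auto
    also have "\<dots> = P * (E * Bk)" unfolding BE ..
    also have "\<dots> = Pk * Bk" unfolding Pk_def using P E Bk by (intro assoc_mult_mat[symmetric]) auto
    finally show ?thesis .
  qed
  have inj: "V = 0\<^sub>m k 1" if V: "V \<in> carrier_mat k 1" and PV: "Pk * V = 0\<^sub>m n 1" for V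
  proof -
    have "E * V = (Q * P) * (E * V)" using QP E V by simp
    also have "\<dots> = Q * (P * (E * V))" using Q P E V by (intro assoc_mult_mat) auto
    also have "P * (E * V) = Pk * V" unfolding Pk_def using P E V by (intro assoc_mult_mat[symmetric]) auto
    finally have EV: "E * V = 0\<^sub>m n 1" using PV Q by simp
    show ?thesis
    proof (rule eq_matI)
      fix i j assume ij: "i < dim_row (0\<^sub>m k 1)" "j < dim_col (0\<^sub>m k 1)"
      then have i: "i < k" and j: "j = 0" by auto
      have "(E * V) $$ (i,0) = (\<Sum>l\<in>{0..<k}. E $$ (i,l) * V $$ (l,0))" using E V i k by (simp add: scalar_prod_def)
      also have "\<dots> = (\<Sum>l\<in>{0..<k}. if l = i then V $$ (i,0) else 0)"
        using i k by (intro sum.cong refl) (auto simp: E_def)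
      also have "\<dots> = V $$ (i,0)" using i by simp
      finally show "V $$ (i,j) = 0\<^sub>m k 1 $$ (i,j)" using EV i j k by simp
    qed (use V in auto)
  qed
  have detBk: "det Bk = (\<Prod>i<k. eigs ! i)"
  proof -
    have "upper_triangular Bk" using ut B k unfolding upper_triangular_def Bk_def by auto
    then have "det Bk = prod_list (diag_mat Bk)" using det_upper_triangular Bk by blast
    also have "\<dots> = (\<Prod>i=0..<k. Bk $$ (i,i))" using Bk by (simp add: prod_list_diag_prod)
    also have "\<dots> = (\<Prod>i<k. eigs ! i)" using k eigsB by (auto simp: Bk_def atLeast0LessThan intro!: prod.cong)
    finally show ?thesis .
  qed
  have cA: "cmod (A $$ (i,j)) \<le> vec_inf_norm (col A j)" if ij: "i < n" "j < n" for i j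
  proof -
    have "cmod (A $$ (i,j)) = cmod (col A j $ i)" using A ij by simp
    also have "\<dots> \<le> vec_inf_norm (col A j)" unfolding vec_inf_norm_def using A ij by (intro Max_ge) auto
    finally show ?thesis .
  qed
  from core[OF A Pk Bk APk inj cA k] show ?thesis unfolding detBk .
qed

theorem theorem3p13:
  fixes A :: "complex mat" and n k :: nat and eigs :: "complex list"
  assumes "A \<in> carrier_mat n n"
    and "1 \<le> k" and "k \<le> n"
    and "length eigs = n"
    and "char_poly A = (\<Prod>a\<leftarrow>eigs. [:- a, 1:])"
    and "sorted_wrt (\<lambda>x y. cmod x \<ge> cmod y) eigs"
  shows "cmod (\<Prod>i<k. eigs ! i)
    \<le> (real n / real k) powr (real k / 2) * sqrt (real n) ^ k *
       min (MAX \<alpha> \<in> {\<alpha>. \<alpha> \<subseteq> {0..<n} \<and> card \<alpha> = k}. \<Prod>i\<in>\<alpha>. vec_inf_norm (col A i))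
           (MAX \<alpha> \<in> {\<alpha>. \<alpha> \<subseteq> {0..<n} \<and> card \<alpha> = k}. \<Prod>i\<in>\<alpha>. vec_inf_norm (row A i))"
proof -
  let ?Sk = "{\<alpha>. \<alpha> \<subseteq> {0..<n} \<and> card \<alpha> = k}"
  note A = assms(1) and k = assms(2,3) and cp = assms(5)
  have C: "(real n / real k) powr (real k / 2) * sqrt (real n) ^ k = sqrt ((real n ^ 2 / real k) ^ k)"
  proof -
    have nk: "real n / real k > 0" using k by auto
    have "(real n / real k) powr (real k / 2) = ((real n / real k) powr real k) powr (1/2)"
      by (simp add: powr_powr)
    also have "\<dots> = sqrt ((real n / real k) ^ k)" using nk by (simp add: powr_realpow powr_half_sqrt)
    finally have "(real n / real k) powr (real k / 2) * sqrt (real n) ^ k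
        = sqrt ((real n / real k) ^ k) * sqrt (real n ^ k)" by (simp add: real_sqrt_power)
    also have "\<dots> = sqrt ((real n ^ 2 / real k) ^ k)"
      by (simp add: real_sqrt_mult[symmetric] power_mult_distrib[symmetric] power2_eq_square)
    finally show ?thesis .
  qed
  have c1: "cmod (\<Prod>i<k. eigs ! i) \<le> sqrt ((real n ^ 2 / real k) ^ k) *
     (MAX S \<in> ?Sk. \<Prod>j\<in>S. vec_inf_norm (col A j))"
    by (rule main_col[OF A k cp])
  have AT: "transpose_mat A \<in> carrier_mat n n" using A by simp
  have cpT: "char_poly (transpose_mat A) = (\<Prod>a\<leftarrow>eigs. [:- a, 1:])" using cp A by simp
  have c2': "cmod (\<Prod>i<k. eigs ! i) \<le> sqrt ((real n ^ 2 / real k) ^ k) *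
     (MAX S \<in> ?Sk. \<Prod>j\<in>S. vec_inf_norm (col (transpose_mat A) j))"
    by (rule main_col[OF AT k cpT])
  have "(\<lambda>S. \<Prod>j\<in>S. vec_inf_norm (col (transpose_mat A) j)) ` ?Sk = (\<lambda>S. \<Prod>j\<in>S. vec_inf_norm (row A j)) ` ?Sk"
  proof (rule image_cong[OF refl])
    fix S assume "S \<in> ?Sk"
    then show "(\<Prod>j\<in>S. vec_inf_norm (col (transpose_mat A) j)) = (\<Prod>j\<in>S. vec_inf_norm (row A j))"
      using A by (intro prod.cong refl) (auto simp: subset_eq)
  qed
  then have c2: "cmod (\<Prod>i<k. eigs ! i) \<le> sqrt ((real n ^ 2 / real k) ^ k) *
     (MAX S \<in> ?Sk. \<Prod>j\<in>S. vec_inf_norm (row A j))" using c2' by simp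
  show ?thesis unfolding C using c1 c2 by (simp add: min_def)
qed

end
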